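(* Let a target $T$ be fixed at a point $(x_T,y_T)\in\mathbb{R}^2$, and consider a UAV with dynamics $\dot x=V\cos\psi$, $\dot y=V\sin\psi$, $\dot\psi=\omega$, $V>0$ constant. Let $r(t)$ be the distance from the UAV to $T$ and $\theta(t)\in[0,2\pi)$ the bearing angle. Equivalently, in these variables $\dot r=-V\cos\theta$, $\dot\theta=\omega+\frac{V\sin\theta}{r}$. Let the control input be $$\omega=\begin{cases} k\left[V\cos\!\left(\pi-\sin^{-1}\!\left(\frac{r_a}{r(t)}\right)\right)-\dot r(t)\right], & r(t)\ge r_a,\\ 0,&\text{otherwise},\end{cases}$$ with constants $k>0$ and $r_a\ge 0$. Suppose there is $t_0\ge 0$ such that $r(t_0)\ge r_a$ and $\theta(t_0)\in\left(\sin^{-1}\!\left(\frac{r_a}{r(t_0)}\right),\,2\pi-\sin^{-1}\!\left(\frac{r_a}{r(t_0)}\right)\right)$. Then $r(t)\ge r_a$ for all $t\ge t_0$.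
   Context: The bearing angle $\theta(t)\in[0,2\pi)$ is the angle measured counterclockwise from the vector pointing from the UAV's current position to $T$ to the UAV's current heading direction $(\cos\psi,\sin\psi)$. $\sin^{-1}$ is the principal arcsine. *)

theory Defs
  imports "HOL-Analysis.Analysis"
begin

definition range_to :: "real \<Rightarrow> real \<Rightarrow> real \<Rightarrow> real \<Rightarrow> real" where
  "range_to px py xT yT = sqrt ((xT - px)^2 + (yT - py)^2)"

text \<open>Bearing angle in [0, 2 pi): the counterclockwise angle from the unit vector
  pointing from the UAV (px,py) to the target (xT,yT) to the heading (cos psi, sin psi).\<close>
definition bearing :: "real \<Rightarrow> real \<Rightarrow> real \<Rightarrow> real \<Rightarrow> real \<Rightarrow> real" where
  "bearing psi px py xT yT =
     (let d = range_to px py xT yT; u1 = (xT - px) / d; u2 = (yT - py) / d in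
      THE th. 0 \<le> th \<and> th < 2 * pi \<and>
              cos psi = cos th * u1 - sin th * u2 \<and>
              sin psi = sin th * u1 + cos th * u2)"

end

theory Submission
  imports Defs
begin

lemma bearing_cos:
  assumes d0: "range_to px py xT yT > 0"
  shows "cos (bearing pp px py xT yT) = ((xT - px) * cos pp + (yT - py) * sin pp) / range_to px py xT yT"
proof -
  define d where "d = range_to px py xT yT"
  define u1 where "u1 = (xT - px) / d"
  define u2 where "u2 = (yT - py) / d"
  have dpos: "d > 0" using d0 d_def by simp
  have dd: "d^2 = (xT-px)^2 + (yT-py)^2" unfolding d_def range_to_def by simp
  have uu: "u1^2 + u2^2 = 1"
  proof -
    have "u1^2 + u2^2 = ((xT-px)^2 + (yT-py)^2) / d^2" unfolding u1_def u2_def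
      by (simp add: power_divide add_divide_distrib)
    also have "\<dots> = 1" using dd dpos by (metis div_self power_not_zero less_irrefl)
    finally show ?thesis .
  qed
  define c where "c = cos pp * u1 + sin pp * u2"
  define s where "s = sin pp * u1 - cos pp * u2"
  have cs: "c^2 + s^2 = 1"
  proof -
    have "c^2 + s^2 = (sin pp ^2 + cos pp ^2) * (u1^2+u2^2)" unfolding c_def s_def by algebra
    then show ?thesis using uu by simp
  qed
  obtain th0 where th0: "0 \<le> th0" "th0 < 2*pi" "c = cos th0" "s = sin th0"
    using sincos_total_2pi[OF cs] by blast
  define Pr where "Pr th = (0 \<le> th \<and> th < 2 * pi \<and>
              cos pp = cos th * u1 - sin th * u2 \<and>
              sin pp = sin th * u1 + cos th * u2)" for th
  have cs1: "cos pp = c * u1 - s * u2"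
  proof -
    have "c * u1 - s * u2 = cos pp * (u1^2+u2^2)" unfolding c_def s_def by algebra
    then show ?thesis using uu by simp
  qed
  have cs2: "sin pp = s * u1 + c * u2"
  proof -
    have "s * u1 + c * u2 = sin pp * (u1^2+u2^2)" unfolding c_def s_def by algebra
    then show ?thesis using uu by simp
  qed
  have P0: "Pr th0" unfolding Pr_def using th0 cs1 cs2 by simp
  have uniq: "th = th0" if "Pr th" for th
  proof -
    have e1: "cos pp = cos th * u1 - sin th * u2" and e2: "sin pp = sin th * u1 + cos th * u2"
      and b: "0 \<le> th" "th < 2*pi" using that unfolding Pr_def by auto
    have "c = cos th * (u1^2+u2^2)" unfolding c_def e1 e2 by algebra
    then have cc: "cos th = cos th0" using uu th0 by simp
    have "s = sin th * (u1^2+u2^2)" unfolding s_def e1 e2 by algebra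
    then have ss: "sin th = sin th0" using uu th0 by simp
    obtain n :: int where n: "th = th0 + 2*pi*n" using sin_cos_eq_iff cc ss by blast
    have "pi * real_of_int n < pi * 1" using n b th0 by linarith
    then have "real_of_int n < 1" using pi_gt_zero mult_less_cancel_left_pos by blast
    then have "n < 1" by simp
    moreover have "pi * (-1) < pi * real_of_int n" using n b th0 by linarith
    then have "-1 < real_of_int n" using pi_gt_zero mult_less_cancel_left_pos by blast
    then have "-1 < n" by simp
    ultimately have "n = 0" by simp
    then show ?thesis using n by simp
  qed
  have "bearing pp px py xT yT = (THE th. Pr th)"
    unfolding bearing_def Pr_def Let_def d_def[symmetric] u1_def[symmetric] u2_def[symmetric] by simp
  also have "\<dots> = th0" using P0 uniq by (rule the_equality)
  finally have "cos (bearing pp px py xT yT) = c" using th0 by simp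
  moreover have "c = ((xT - px) * cos pp + (yT - py) * sin pp) / d"
    unfolding c_def u1_def u2_def by (simp add: add_divide_distrib mult.commute)
  ultimately show ?thesis unfolding d_def by simp
qed


lemma gen_alg:
  fixes cc ss z a b V :: real
  assumes "ss^2 + cc^2 = 1"
  shows "(0 - V * cc) * cc + - ss * z * a + ((0 - V * ss) * ss + cc * z * b) = -V + (b * cc - a * ss) * z"
proof -
  have "(0 - V * cc) * cc + - ss * z * a + ((0 - V * ss) * ss + cc * z * b) = -V * (ss^2+cc^2) + (b * cc - a * ss) * z"
    by algebra
  then show ?thesis using assms by simp
qed

theorem lemma2:
  fixes x y psi :: "real \<Rightarrow> real" and xT yT V k ra t0 :: real
  assumes V_pos: "V > 0" and k_pos: "k > 0" and ra_nonneg: "ra \<ge> 0" and t0_nonneg: "t0 \<ge> 0"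
    and dx: "\<forall>t\<ge>0. (x has_real_derivative V * cos (psi t)) (at t within {0..})"
    and dy: "\<forall>t\<ge>0. (y has_real_derivative V * sin (psi t)) (at t within {0..})"
    and dpsi: "\<forall>t\<ge>0. (psi has_real_derivative
               (if range_to (x t) (y t) xT yT \<ge> ra
                then k * (V * cos (pi - arcsin (ra / range_to (x t) (y t) xT yT))
                          - vector_derivative (\<lambda>s. range_to (x s) (y s) xT yT) (at t within {0..}))
                else 0)) (at t within {0..})"
    and r0: "range_to (x t0) (y t0) xT yT \<ge> ra"
    and th0_lo: "arcsin (ra / range_to (x t0) (y t0) xT yT) < bearing (psi t0) (x t0) (y t0) xT yT"
    and th0_hi: "bearing (psi t0) (x t0) (y t0) xT yT < 2 * pi - arcsin (ra / range_to (x t0) (y t0) xT yT)"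
  shows "\<forall>t\<ge>t0. range_to (x t) (y t) xT yT \<ge> ra"
proof (cases "ra = 0")
  case True then show ?thesis by (simp add: range_to_def)
next
  case False
  then have ra_pos: "ra > 0" using ra_nonneg by simp
  define R where "R t = range_to (x t) (y t) xT yT" for t
  define d1 where "d1 t = xT - x t" for t
  define d2 where "d2 t = yT - y t" for t
  define P where "P t = d1 t * cos (psi t) + d2 t * sin (psi t)" for t
  define W where "W t = d2 t * cos (psi t) - d1 t * sin (psi t)" for t
  define Q where "Q t = sqrt (d1 t ^2 + d2 t ^2 - ra^2)" for t
  define H where "H t = Q t - P t" for t
  have R_eq: "R t = sqrt (d1 t^2 + d2 t^2)" for t
    by (simp add: R_def range_to_def d1_def d2_def)
  have R2: "R t ^2 = d1 t^2 + d2 t^2" for t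
    unfolding R_eq by simp
  have PW: "P t^2 + W t^2 = R t ^2" for t
  proof -
    have "P t^2 + W t^2 = (d1 t^2 + d2 t^2) * (sin (psi t)^2 + cos (psi t)^2)"
      unfolding P_def W_def by algebra
    then show ?thesis using R2 by simp
  qed
  have R_nonneg: "R t \<ge> 0" for t unfolding R_eq by simp
  have W_bound: "- W t \<le> R t" for t
  proof -
    have "W t ^2 \<le> R t ^2" using PW[of t] by (smt (verit) zero_le_power2)
    then have "\<bar>W t\<bar> \<le> R t" using R_nonneg[of t] by (metis abs_le_square_iff abs_of_nonneg)
    then show ?thesis by simp
  qed
  have Q_R: "R t \<ge> ra \<Longrightarrow> Q t = sqrt (R t ^2 - ra^2)" for t unfolding Q_def R2 by simp
  have int0: "at t within {0..} = at t" if "t > 0" for t :: real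
    using that by (intro at_within_interior) simp
  have cx: "continuous_on {0..} x" using dx
    by (meson DERIV_continuous atLeast_iff continuous_on_eq_continuous_within)
  have cy: "continuous_on {0..} y" using dy
    by (meson DERIV_continuous atLeast_iff continuous_on_eq_continuous_within)
  have cpsi: "continuous_on {0..} psi" using dpsi
    by (meson DERIV_continuous atLeast_iff continuous_on_eq_continuous_within)
  have cR: "continuous_on {0..} R"
    unfolding R_def range_to_def using cx cy by (intro continuous_intros)
  have cH: "continuous_on {0..} H"
    unfolding H_def Q_def P_def d1_def d2_def using cx cy cpsi by (intro continuous_intros)
  have dR: "(R has_real_derivative - V * P t / R t) (at t within {0..})" if "t \<ge> 0" "R t > 0" for t
  proof -
    have e: "R = (\<lambda>s. sqrt ((xT - x s)^2 + (yT - y s)^2))" by (simp add: R_def range_to_def fun_eq_iff)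
    have pos: "(xT - x t)^2 + (yT - y t)^2 > 0" using that(2) R_eq[of t] unfolding d1_def d2_def by simp
    note sq = real_sqrt_gt_zero[OF pos]
    have inner: "((\<lambda>s. (xT - x s)^2 + (yT - y s)^2) has_real_derivative
        2 * (xT - x t) * (- (V * cos (psi t))) + 2 * (yT - y t) * (- (V * sin (psi t)))) (at t within {0..})"
      by (rule derivative_eq_intros refl dx[rule_format] dy[rule_format] that)+ (simp add: algebra_simps)
    have "((\<lambda>s. sqrt ((xT - x s)^2 + (yT - y s)^2)) has_real_derivative
        inverse (sqrt ((xT - x t)^2 + (yT - y t)^2)) / 2 *
        (2 * (xT - x t) * (- (V * cos (psi t))) + 2 * (yT - y t) * (- (V * sin (psi t)))))
        (at t within {0..})"
      by (rule DERIV_chain2[OF DERIV_real_sqrt[OF pos] inner])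
    moreover have eq: "inverse S / 2 * (2 * (xT - x t) * (- (V * cos (psi t))) + 2 * (yT - y t) * (- (V * sin (psi t))))
         = - V * P t / S" for S :: real
        unfolding P_def d1_def d2_def divide_inverse by algebra
    ultimately show ?thesis unfolding e
      by (rule DERIV_cong)
  qed
  have Req: "(\<lambda>s. range_to (x s) (y s) xT yT) = R" by (simp add: R_def fun_eq_iff)
  have dpsi': "(psi has_real_derivative - k * V * H t / R t) (at t)" if "t > 0" "R t > ra" for t
  proof -
    have Rp: "R t > 0" using that ra_pos by linarith
    have vd: "vector_derivative R (at t within {0..}) = - V * P t / R t"
      using dR[of t] that Rp int0[of t]
      by (simp add: has_real_derivative_iff_has_vector_derivative vector_derivative_at)
    have sq: "sqrt (1 - (ra / R t)^2) = Q t / R t"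
    proof -
      have "1 - (ra/R t)^2 = (R t^2 - ra^2) / (R t)^2" using Rp by (simp add: field_simps power_divide)
      hence "sqrt (1 - (ra/R t)^2) = sqrt (R t^2 - ra^2) / R t" using Rp by (simp add: real_sqrt_divide)
      thus ?thesis using Q_R[of t] that by simp
    qed
    have b1: "ra / R t \<le> 1" using Rp that by simp
    have b2: "-1 \<le> ra / R t" using Rp ra_pos by (smt (verit) divide_nonneg_pos)
    have ca: "cos (pi - arcsin (ra / R t)) = - (Q t / R t)"
      using cos_arcsin[OF b2 b1] sq by simp
    have "(psi has_real_derivative (k * (V * cos (pi - arcsin (ra / R t))
                          - vector_derivative R (at t within {0..})))) (at t)"
      using dpsi[rule_format, of t] that int0[of t] unfolding Req R_def[symmetric] by simp
    then show ?thesis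
    proof (rule DERIV_cong)
      show "k * (V * cos (pi - arcsin (ra / R t)) - vector_derivative R (at t within {0..})) = - k * V * H t / R t"
        unfolding ca vd H_def using Rp by (simp add: field_simps)
    qed
  qed
  have dG: "((\<lambda>s. H s * exp (k * V * s)) has_real_derivative
       exp (k * V * t) * H t * (V / Q t + k * V * (W t / R t + 1))) (at t)"
    if "t > 0" "R t > ra" for t
  proof -
    have Rp: "R t > 0" using that ra_pos by linarith
    have dx': "(x has_real_derivative V * cos (psi t)) (at t)" using dx[rule_format, of t] that int0[of t] by simp
    have dy': "(y has_real_derivative V * sin (psi t)) (at t)" using dy[rule_format, of t] that int0[of t] by simp
    have dp: "(psi has_real_derivative - k * V * H t / R t) (at t)" using dpsi' that by simp
    have Apos: "d1 t ^2 + d2 t ^2 - ra^2 > 0"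
    proof -
      have "ra^2 < R t^2" using that ra_pos by (intro power_strict_mono) auto
      then show ?thesis using R2[of t] by linarith
    qed
    have Qp: "Q t > 0" unfolding Q_def using Apos by simp
    have inner: "((\<lambda>s. d1 s ^2 + d2 s ^2 - ra^2) has_real_derivative
        2 * d1 t * (- (V * cos (psi t))) + 2 * d2 t * (- (V * sin (psi t)))) (at t)"
      unfolding d1_def d2_def by (rule derivative_eq_intros refl dx' dy')+ (simp add: algebra_simps)
    have "(Q has_real_derivative inverse (sqrt (d1 t ^2 + d2 t ^2 - ra^2)) / 2 *
        (2 * d1 t * (- (V * cos (psi t))) + 2 * d2 t * (- (V * sin (psi t))))) (at t)"
      unfolding Q_def[abs_def] by (rule DERIV_chain2[OF DERIV_real_sqrt[OF Apos] inner])
    moreover have "inverse S / 2 * (2 * d1 t * (- (V * cos (psi t))) + 2 * d2 t * (- (V * sin (psi t))))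
         = - V * P t / S" for S :: real
        unfolding P_def divide_inverse by algebra
    ultimately have dQ: "(Q has_real_derivative - V * P t / Q t) (at t)"
      unfolding Q_def by simp
    have dP: "(P has_real_derivative (- V + W t * (- k * V * H t / R t))) (at t)"
      unfolding P_def[abs_def] d1_def d2_def
      apply (rule derivative_eq_intros refl dx' dy' dp)+
      unfolding W_def d1_def d2_def
      by (rule gen_alg[OF sin_cos_squared_add])
    have dH: "(H has_real_derivative (- V * P t / Q t - (- V + W t * (- k * V * H t / R t)))) (at t)"
      unfolding H_def[abs_def] by (rule derivative_eq_intros dQ dP)+ (simp add: H_def)
    have "((\<lambda>s. H s * exp (k * V * s)) has_real_derivative
       (- V * P t / Q t - (- V + W t * (- k * V * H t / R t))) * exp (k * V * t) + H t * (exp (k * V * t) * (k * V))) (at t)"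
      by (rule derivative_eq_intros refl dH)+ simp
    then show ?thesis
    proof (rule DERIV_cong)
      have h1: "(- V * P t / Q t - (- V + W t * (- k * V * H t / R t))) + H t * (k * V)
          = H t * (V / Q t + k * V * (W t / R t + 1))"
        using Qp Rp unfolding H_def by (simp add: field_simps)
      have "(- V * P t / Q t - (- V + W t * (- k * V * H t / R t))) * exp (k * V * t) + H t * (exp (k * V * t) * (k * V))
         = exp (k * V * t) * ((- V * P t / Q t - (- V + W t * (- k * V * H t / R t))) + H t * (k * V))"
        by (simp add: algebra_simps)
      also have "\<dots> = exp (k * V * t) * H t * (V / Q t + k * V * (W t / R t + 1))"
        unfolding h1 by simp
      finally show "(- V * P t / Q t - (- V + W t * (- k * V * H t / R t))) * exp (k * V * t) + H t * (exp (k * V * t) * (k * V))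
         = exp (k * V * t) * H t * (V / Q t + k * V * (W t / R t + 1))" .
    qed
  qed
  have HA: "H t0 > 0"
  proof -
    have Rp: "R t0 > 0" using r0 ra_pos R_def by simp
    have rR: "ra \<le> R t0" using r0 R_def by simp
    define th where "th = bearing (psi t0) (x t0) (y t0) xT yT"
    define be where "be = arcsin (ra / R t0)"
    have cth: "cos th = P t0 / R t0"
      unfolding th_def using bearing_cos[of "x t0" "y t0" xT yT "psi t0"] Rp
      by (simp add: R_def P_def d1_def d2_def)
    have b1: "ra / R t0 \<le> 1" using Rp rR by simp
    have b0: "0 \<le> ra / R t0" using Rp ra_pos by simp
    have b2: "-1 \<le> ra / R t0" using b0 by simp
    have be0: "0 \<le> be" unfolding be_def using arcsin_nonneg b0 b1 by simp
    have be1: "be \<le> pi/2" unfolding be_def using arcsin_ubound[OF b2 b1] .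
    have lo: "be < th" and hi: "th < 2*pi - be" using th0_lo th0_hi unfolding th_def be_def R_def by auto
    have "cos th < cos be"
    proof (cases "th \<le> pi")
      case True then show ?thesis using cos_monotone_0_pi[OF be0 lo] by simp
    next
      case False
      have "cos (2*pi - th) < cos be" using False hi be0 by (intro cos_monotone_0_pi) auto
      then show ?thesis by simp
    qed
    moreover have sq: "sqrt (1 - (ra / R t0)^2) = Q t0 / R t0"
    proof -
      have "1 - (ra/R t0)^2 = (R t0^2 - ra^2) / (R t0)^2" using Rp by (simp add: field_simps power_divide)
      hence "sqrt (1 - (ra/R t0)^2) = sqrt (R t0^2 - ra^2) / R t0" using Rp by (simp add: real_sqrt_divide)
      thus ?thesis using Q_R[of t0] rR by simp
    qed
    moreover have "cos be = Q t0 / R t0" unfolding be_def using cos_arcsin[OF b2 b1] sq by simp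
    ultimately have "P t0 / R t0 < Q t0 / R t0" using cth by simp
    then have "P t0 < Q t0" using Rp by (simp add: divide_strict_right_mono_neg divide_less_cancel)
    then show ?thesis unfolding H_def by simp
  qed
  have HB: "H tau > 0" if tau: "t0 \<le> tau" "\<forall>s\<in>{t0..tau}. R s \<ge> ra" for tau
  proof (rule ccontr)
    assume "\<not> H tau > 0"
    define C where "C = {t0..tau} \<inter> H -` {..0}"
    have tauC: "tau \<in> C" using tau \<open>\<not> H tau > 0\<close> by (simp add: C_def)
    have Cne: "C \<noteq> {}" using tauC by auto
    have bdd: "bdd_below C" unfolding C_def by (rule bdd_belowI[of _ t0]) auto
    have cHs: "continuous_on {t0..tau} H" using t0_nonneg by (intro continuous_on_subset[OF cH]) auto
    have clC: "closed C" unfolding C_def by (rule continuous_closed_preimage[OF cHs]) auto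
    define sg where "sg = Inf C"
    have sgC: "sg \<in> C" unfolding sg_def by (rule closed_contains_Inf[OF Cne bdd clC])
    then have sg1: "t0 \<le> sg" "sg \<le> tau" "H sg \<le> 0" by (auto simp: C_def)
    have low: "H s > 0" if "t0 \<le> s" "s < sg" for s
    proof (rule ccontr)
      assume "\<not> H s > 0"
      then have "s \<in> C" using that sg1 by (auto simp: C_def)
      then have "sg \<le> s" unfolding sg_def using bdd by (rule cInf_lower)
      then show False using that by simp
    qed
    have t0sg: "t0 < sg" using sg1 HA by (cases "t0 = sg") auto
    have Rgt: "R s > ra" if s: "t0 < s" "s < sg" for s
    proof (rule ccontr)
      assume "\<not> R s > ra"
      moreover have "R s \<ge> ra" using tau(2) s sg1 by auto
      ultimately have Rs: "R s = ra" by simp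
      have Rp: "R s > 0" using Rs ra_pos by simp
      have "Q s = 0" using Q_R[of s] Rs by simp
      then have Pn: "P s < 0" using low[of s] s unfolding H_def by simp
      have spos: "s > 0" using s t0_nonneg by simp
      have "(R has_real_derivative - V * P s / R s) (at s)" using dR[of s] spos Rp int0[of s] by simp
      moreover have "- V * P s / R s > 0" using Pn Rp V_pos by (simp add: divide_neg_pos mult_pos_neg)
      ultimately obtain d where d: "d > 0" "\<And>h. h > 0 \<Longrightarrow> h < d \<Longrightarrow> R (s - h) < R s"
        using DERIV_pos_inc_left by blast
      define h where "h = min (d/2) ((s - t0)/2)"
      have "h > 0" "h < d" using d s by (auto simp: h_def)
      then have "R (s - h) < ra" using d Rs by simp
      moreover have "h \<le> (s - t0)/2" unfolding h_def by (rule min.cobounded2)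
      then have "s - h \<in> {t0..tau}" using s sg1 \<open>h > 0\<close> by auto
      ultimately show False using tau by force
    qed
    define t1 where "t1 = (t0 + sg) / 2"
    have t1: "t0 < t1" "t1 < sg" using t0sg by (auto simp: t1_def)
    define G where "G s = H s * exp (k * V * s)" for s
    have "G t1 \<le> G sg"
    proof (rule DERIV_nonneg_imp_increasing_open[of t1 sg G])
      show "t1 \<le> sg" using t1 by simp
      show "continuous_on {t1..sg} G" unfolding G_def
        using continuous_on_subset[OF cH, of "{t1..sg}"] t1 t0_nonneg
        by (intro continuous_intros) auto
      fix u assume u: "t1 < u" "u < sg"
      have upos: "u > 0" using u t1 t0_nonneg by simp
      have Ru: "R u > ra" using Rgt u t1 by simp
      have Rp: "R u > 0" using Ru ra_pos by simp
      have Hu: "H u > 0" using low u t1 by simp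
      have "ra^2 < R u^2" using Ru ra_pos by (intro power_strict_mono) auto
      then have Qp: "Q u > 0" using Q_R[of u] Ru by simp
      have "- R u \<le> W u" using W_bound[of u] by simp
      then have "- 1 \<le> W u / R u" using Rp by (simp add: le_divide_eq)
      then have Wn: "W u / R u + 1 \<ge> 0" by simp
      have "exp (k * V * u) * H u * (V / Q u + k * V * (W u / R u + 1)) \<ge> 0"
      proof -
        have "V / Q u \<ge> 0" using V_pos Qp by simp
        moreover have "k * V * (W u / R u + 1) \<ge> 0" using V_pos k_pos Wn by simp
        ultimately have "V / Q u + k * V * (W u / R u + 1) \<ge> 0" by linarith
        then show ?thesis using Hu by simp
      qed
      then show "\<exists>y. (G has_real_derivative y) (at u) \<and> y \<ge> 0"
        using dG[OF upos Ru] unfolding G_def[abs_def] by blast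
    qed
    moreover have "G t1 > 0" unfolding G_def using low[of t1] t1 by simp
    moreover have "G sg \<le> 0" unfolding G_def using sg1 by (simp add: mult_nonpos_nonneg)
    ultimately show False by simp
  qed
  show ?thesis
  proof (intro allI impI)
    fix t1 assume t1: "t0 \<le> t1"
    show "ra \<le> range_to (x t1) (y t1) xT yT"
    proof (rule ccontr)
      assume "\<not> ra \<le> range_to (x t1) (y t1) xT yT"
      then have Rt1: "R t1 < ra" by (simp add: R_def)
      define B where "B = {s \<in> {t0..t1}. R s < ra}"
      have t1B: "t1 \<in> B" using t1 Rt1 by (simp add: B_def)
      have Bne: "B \<noteq> {}" using t1B by auto
      have bdd: "bdd_below B" unfolding B_def by (rule bdd_belowI[of _ t0]) auto
      define tau where "tau = Inf B"
      have tau1: "t0 \<le> tau" unfolding tau_def using Bne by (rule cInf_greatest) (auto simp: B_def)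
      have tau2: "tau \<le> t1" unfolding tau_def using t1B bdd by (rule cInf_lower)
      have below: "R s \<ge> ra" if "t0 \<le> s" "s < tau" for s
      proof (rule ccontr)
        assume "\<not> R s \<ge> ra"
        then have "s \<in> B" using that tau2 by (auto simp: B_def)
        then have "tau \<le> s" unfolding tau_def using bdd by (rule cInf_lower)
        then show False using that by simp
      qed
      have Rtau: "R tau \<ge> ra"
      proof (rule ccontr)
        assume nt: "\<not> R tau \<ge> ra"
        have "tau \<noteq> t0" using nt r0 by (auto simp: R_def)
        then have tg: "tau > t0" using tau1 by simp
        then have "tau \<in> interior {0..}" using t0_nonneg by simp
        then have "continuous (at tau) R" by (rule continuous_on_interior[OF cR])
        then have "(R \<longlongrightarrow> R tau) (at tau)" by (simp add: isCont_def)
        then have "eventually (\<lambda>s. R s < ra) (at tau)" using nt by (intro order_tendstoD(2)) auto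
        then obtain d where d: "d > 0" "\<And>s. s \<noteq> tau \<Longrightarrow> dist s tau < d \<Longrightarrow> R s < ra"
          unfolding eventually_at by auto
        define s where "s = max t0 (tau - d/2)"
        have "s < tau" "t0 \<le> s" using tg d by (auto simp: s_def)
        moreover have "dist s tau < d" using tg d by (auto simp: s_def dist_real_def)
        ultimately show False using d(2)[of s] below[of s] by simp
      qed
      have allR: "\<forall>s\<in>{t0..tau}. R s \<ge> ra" using below Rtau by (metis atLeastAtMost_iff order_le_less)
      have Htau: "H tau > 0" using HB[OF tau1 allR] .
      have tau0: "tau \<ge> 0" using tau1 t0_nonneg by simp
      have Rp: "R tau > 0" using Rtau ra_pos by simp
      obtain e where e: "e > 0" "\<And>s. tau < s \<Longrightarrow> s < tau + e \<Longrightarrow> R s \<ge> ra"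
      proof (cases "R tau > ra")
        case True
        have "continuous (at tau within {0..}) R"
          using cR tau0 by (simp add: continuous_on_eq_continuous_within)
        then have "(R \<longlongrightarrow> R tau) (at tau within {0..})" by (simp add: continuous_within)
        then have "eventually (\<lambda>s. R s > ra) (at tau within {0..})" using True by (intro order_tendstoD(1)) auto
        then obtain d where d: "d > 0" "\<And>s. s \<in> {0..} \<Longrightarrow> s \<noteq> tau \<Longrightarrow> dist s tau < d \<Longrightarrow> R s > ra"
          unfolding eventually_at by auto
        show ?thesis
        proof (rule that[OF d(1)])
          fix s assume s: "tau < s" "s < tau + d"
          then show "R s \<ge> ra" using d(2)[of s] tau0 by (simp add: dist_real_def)
        qed
      next
        case False
        then have Rs: "R tau = ra" using Rtau by simp
        have "Q tau = 0" using Q_R[of tau] Rs by simp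
        then have Pn: "P tau < 0" using Htau unfolding H_def by simp
        have "- V * P tau / R tau > 0" using Pn Rp V_pos by (simp add: divide_neg_pos mult_pos_neg)
        then obtain d where d: "d > 0" "\<And>h. h > 0 \<Longrightarrow> tau + h \<in> {0..} \<Longrightarrow> h < d \<Longrightarrow> R tau < R (tau + h)"
          using has_real_derivative_pos_inc_right[OF dR[OF tau0 Rp]] by blast
        show ?thesis
        proof (rule that[OF d(1)])
          fix s assume s: "tau < s" "s < tau + d"
          have "R tau < R (tau + (s - tau))" using d(2)[of "s - tau"] s tau0 by simp
          then show "R s \<ge> ra" using Rs by simp
        qed
      qed
      have "Inf B < tau + e" using e(1) by (simp add: tau_def)
      then obtain b where b: "b \<in> B" "b < tau + e" using cInf_less_iff[OF Bne bdd] by blast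
      have "tau \<le> b" unfolding tau_def using b(1) bdd by (rule cInf_lower)
      moreover have "R b < ra" using b(1) by (simp add: B_def)
      ultimately have "tau < b" using Rtau by (cases "tau = b") auto
      then show False using e(2)[of b] b(2) \<open>R b < ra\<close> by simp
    qed
  qed
qed

end
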